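(* Let $\mathcal E$ be a finite-dimensional Hilbert space and $T\in B(F^2(H_n)\otimes\mathcal E)$ a strictly positive (positive invertible) multi-Toeplitz operator. Then $e(T)=-\ln\det[P_{\mathcal E}T^{-1}|_{\mathcal E}]$.
   Context: Full Fock space $F^2(H_n)$ with basis $e_\alpha$, $\alpha\in\mathbb F_n^+$ (free semigroup on $g_1,\dots,g_n$, identity $g_0$, $e_{g_0}=1$); $S_i\psi=e_i\otimes\psi$. $T$ is multi-Toeplitz if $(S_i\otimes I)^*T(S_j\otimes I)=\delta_{ij}T$. $\mathcal E\equiv1\otimes\mathcal E$ with projection $P_{\mathcal E}$. $\mathcal P(\mathcal E)$ denotes polynomials $p=\sum_{|\alpha|\le m}e_\alpha\otimes h_\alpha$ with $p(0)=h_{g_0}$. $\Delta_T\in B(\mathcal E)$ is defined by $\langle\Delta_Tx,x\rangle=\inf\{\langle T(x-p),x-p\rangle:p\in\mathcal P(\mathcal E),p(0)=0\}$ and the prediction entropy is $e(T)=\ln\det\Delta_T$. *)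

theory Defs
  imports "HOL-Analysis.Analysis"
begin

text \<open>Model of the full Fock space tensored with a finite dimensional Hilbert space E.
  E is modelled as complex^'m (with its Euclidean complex inner product).
  The free semigroup on g_1..g_n is modelled by words (lists) over {0..<n}, the empty
  word being the identity g_0.
  The basis vector e_alpha (x) x is the function that is x at alpha and 0 elsewhere.\<close>

type_synonym 'm fock = "nat list \<Rightarrow> complex^('m::finite)"

definition words :: "nat \<Rightarrow> nat list set" where
  "words n = {w. set w \<subseteq> {..<n}}"

definition cinner :: "complex^('m::finite) \<Rightarrow> complex^'m \<Rightarrow> complex" where
  "cinner x y = (\<Sum>i\<in>UNIV. x $ i * cnj (y $ i))"

definition fockspace :: "nat \<Rightarrow> ('m::finite) fock set" where
  "fockspace n = {f. (\<forall>w. w \<notin> words n \<longrightarrow> f w = 0) \<and> (\<lambda>w. (norm (f w))\<^sup>2) summable_on UNIV}"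

definition fip :: "('m::finite) fock \<Rightarrow> ('m::finite) fock \<Rightarrow> complex" where
  "fip f g = (\<Sum>\<^sub>\<infinity>w. cinner (f w) (g w))"

definition fnorm :: "('m::finite) fock \<Rightarrow> real" where
  "fnorm f = sqrt (\<Sum>\<^sub>\<infinity>w. (norm (f w))\<^sup>2)"

text \<open>Bounded (complex) linear operator on F^2(H_n) (x) E; only values on the space matter.\<close>
definition bounded_op :: "nat \<Rightarrow> (('m::finite) fock \<Rightarrow> ('m::finite) fock) \<Rightarrow> bool" where
  "bounded_op n A \<longleftrightarrow>
     (\<forall>f\<in>fockspace n. A f \<in> fockspace n) \<and>
     (\<forall>f\<in>fockspace n. \<forall>g\<in>fockspace n. \<forall>c::complex.
        A (\<lambda>w. c *s f w + g w) = (\<lambda>w. c *s A f w + A g w)) \<and>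
     (\<exists>C. \<forall>f\<in>fockspace n. fnorm (A f) \<le> C * fnorm f)"

text \<open>The shift S_i (x) I : e_alpha (x) x \<mapsto> e_{g_i alpha} (x) x, and its adjoint.\<close>
definition shift :: "nat \<Rightarrow> ('m::finite) fock \<Rightarrow> ('m::finite) fock" where
  "shift i f = (\<lambda>w. case w of [] \<Rightarrow> 0 | j # v \<Rightarrow> (if j = i then f v else 0))"

definition shift_adj :: "nat \<Rightarrow> ('m::finite) fock \<Rightarrow> ('m::finite) fock" where
  "shift_adj i f = (\<lambda>w. f (i # w))"

definition multi_toeplitz :: "nat \<Rightarrow> (('m::finite) fock \<Rightarrow> ('m::finite) fock) \<Rightarrow> bool" where
  "multi_toeplitz n T \<longleftrightarrow> bounded_op n T \<and>
     (\<forall>i<n. \<forall>j<n. \<forall>f\<in>fockspace n.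
        shift_adj i (T (shift j f)) = (if i = j then T f else (\<lambda>w. 0)))"

definition positive_op :: "nat \<Rightarrow> (('m::finite) fock \<Rightarrow> ('m::finite) fock) \<Rightarrow> bool" where
  "positive_op n T \<longleftrightarrow> bounded_op n T \<and>
     (\<forall>f\<in>fockspace n. fip (T f) f \<in> \<real> \<and> 0 \<le> Re (fip (T f) f))"

definition emb :: "complex^('m::finite) \<Rightarrow> ('m::finite) fock" where
  "emb x = (\<lambda>w. if w = [] then x else 0)"

text \<open>Polynomials in P(E): finitely supported elements; p(0) is the value at the empty word.\<close>
definition polys :: "nat \<Rightarrow> ('m::finite) fock set" where
  "polys n = {p \<in> fockspace n. finite {w. p w \<noteq> 0}}"

definition pred_form :: "nat \<Rightarrow> (('m::finite) fock \<Rightarrow> ('m::finite) fock) \<Rightarrow> complex^'m \<Rightarrow> real" where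
  "pred_form n T x = Inf {Re (fip (T (\<lambda>w. emb x w - p w)) (\<lambda>w. emb x w - p w)) | p.
                            p \<in> polys n \<and> p [] = 0}"

definition Delta :: "nat \<Rightarrow> (('m::finite) fock \<Rightarrow> ('m::finite) fock) \<Rightarrow> complex^('m::finite)^'m" where
  "Delta n T = (THE D. \<forall>x. cinner (D *v x) x = complex_of_real (pred_form n T x))"

text \<open>Prediction entropy e(T) = ln det Delta_T (det of a positive matrix is real).\<close>
definition pred_entropy :: "nat \<Rightarrow> (('m::finite) fock \<Rightarrow> ('m::finite) fock) \<Rightarrow> real" where
  "pred_entropy n T = ln (Re (det (Delta n T)))"

definition compress :: "(('m::finite) fock \<Rightarrow> ('m::finite) fock) \<Rightarrow> complex^('m::finite)^'m" where
  "compress A = (\<chi> i j. (A (emb (axis j 1)) []) $ i)"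

end

theory Submission imports Defs begin

lemma norm_vec_sq: "(norm (x::complex^'m::finite))\<^sup>2 = (\<Sum>i\<in>UNIV. (cmod (x$i))\<^sup>2)"
  unfolding norm_vec_def L2_set_def by (simp add: sum_nonneg)

lemma cinner_self: "cinner x x = complex_of_real ((norm x)\<^sup>2)"
  unfolding cinner_def norm_vec_sq of_real_sum by (rule sum.cong) (simp_all add: complex_norm_square[symmetric])

lemma cinner_add_left: "cinner (x + y) z = cinner x z + cinner y z"
  unfolding cinner_def by (simp add: distrib_right sum.distrib)
lemma cinner_add_right: "cinner z (x + y) = cinner z x + cinner z y"
  unfolding cinner_def by (simp add: distrib_left sum.distrib)
lemma cinner_scale_left: "cinner (c *s x) z = c * cinner x z"
  unfolding cinner_def by (simp add: sum_distrib_left mult.assoc)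
lemma cinner_scale_right: "cinner z (c *s x) = cnj c * cinner z x"
  unfolding cinner_def by (simp add: sum_distrib_left algebra_simps)
lemma cinner_zero_right[simp]: "cinner z 0 = 0" unfolding cinner_def by simp
lemma cinner_zero_left[simp]: "cinner 0 z = 0" unfolding cinner_def by simp
lemma cinner_cnj: "cinner y x = cnj (cinner x y)"
  unfolding cinner_def by (simp add: mult.commute)
lemma cinner_axis_right: "cinner x (axis i 1) = x $ i"
  unfolding cinner_def axis_def by (simp add: if_distrib cong: if_cong)
lemma cinner_axis_left: "cinner (axis i 1) x = cnj (x $ i)"
  by (metis cinner_axis_right cinner_cnj)

lemma cinner_bound: "cmod (cinner x y) \<le> ((norm x)\<^sup>2 + (norm y)\<^sup>2) / 2"
proof -
  have "cmod (cinner x y) \<le> (\<Sum>i\<in>UNIV. cmod (x$i * cnj (y$i)))"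
    unfolding cinner_def by (rule norm_sum)
  also have "\<dots> \<le> (\<Sum>i\<in>UNIV. ((cmod (x$i))\<^sup>2 + (cmod (y$i))\<^sup>2) / 2)"
  proof (rule sum_mono)
    fix i
    have "0 \<le> (cmod (x$i) - cmod (y$i))\<^sup>2" by simp
    then show "cmod (x$i * cnj (y$i)) \<le> ((cmod (x$i))\<^sup>2 + (cmod (y$i))\<^sup>2) / 2"
      by (simp add: norm_mult power2_eq_square algebra_simps)
  qed
  also have "\<dots> = ((norm x)\<^sup>2 + (norm y)\<^sup>2) / 2"
    unfolding norm_vec_sq by (simp add: add_divide_distrib sum.distrib flip: sum_divide_distrib)
  finally show ?thesis .
qed

lemma cinner_bound2: "cmod (cinner x y) * 2 \<le> (norm x)\<^sup>2 + (norm y)\<^sup>2"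
  using cinner_bound[of x y] by simp

lemma mv_axis: "((N::complex^'m::finite^'m) *v axis j 1) $ i = N $ i $ j"
  unfolding matrix_vector_mult_def axis_def by (simp add: if_distrib cong: if_cong)

lemma mv_scale: "(N::complex^'m::finite^'m) *v (c *s x) = c *s (N *v x)"
  unfolding matrix_vector_mult_def by (simp add: vec_eq_iff sum_distrib_left algebra_simps)

lemma polarization_zero:
  fixes N :: "complex^'m::finite^'m"
  assumes "\<forall>x. cinner (N *v x) x = 0"
  shows "N = 0"
proof -
  have key: "cinner (N *v (axis j 1 + c *s axis k 1)) (axis j 1 + c *s axis k 1)
      = N$j$j + cnj c * N$k$j + c * N$j$k + c * cnj c * N$k$k" for j k c
    by (simp add: matrix_vector_right_distrib mv_scale cinner_add_left cinner_add_right
        cinner_scale_left cinner_scale_right cinner_axis_right mv_axis algebra_simps)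
  have d: "N$j$j = 0" for j
    using assms[rule_format, of "axis j 1"] by (simp add: cinner_axis_right mv_axis)
  show ?thesis
  unfolding vec_eq_iff
  proof (intro allI)
    fix j k :: 'm
    have 1: "N$k$j + N$j$k = 0" using key[of j 1 k] assms d by simp
    have 2: "- \<i> * N$k$j + \<i> * N$j$k = 0" using key[of j \<i> k] assms d by simp
    from 1 2 show "N$j$k = 0$j$k" by (simp add: algebra_simps)
  qed
qed

lemma norm_scale_sq: "(norm (c *s (x::complex^'m::finite)))\<^sup>2 = (cmod c)\<^sup>2 * (norm x)\<^sup>2"
  unfolding norm_vec_sq by (simp add: norm_mult power_mult_distrib sum_distrib_left)

lemma norm_add_sq: "(norm (x + y :: complex^'m::finite))\<^sup>2 \<le> 2 * (norm x)\<^sup>2 + 2 * (norm y)\<^sup>2"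
proof -
  have "norm (x + y) \<le> norm x + norm y" by (rule norm_triangle_ineq)
  then have "(norm (x + y))\<^sup>2 \<le> (norm x + norm y)\<^sup>2" by (simp add: power_mono)
  also have "\<dots> \<le> 2 * (norm x)\<^sup>2 + 2 * (norm y)\<^sup>2"
    using sum_squares_bound[of "norm x" "norm y"] by (simp add: power2_eq_square algebra_simps)
  finally show ?thesis .
qed

lemma summable_on_cdivide: "f summable_on A \<Longrightarrow> (\<lambda>x. f x / (c::real)) summable_on A"
  using has_sum_divide_const summable_on_def by blast

lemma infsum_cdivide: "infsum (\<lambda>x. f x / (c::real)) A = infsum f A / c"
  using infsum_cmult_left'[of f "inverse c" A] by (simp add: divide_inverse)

lemma fsD: assumes "f \<in> fockspace n"
  shows "(\<lambda>w. (norm (f w))\<^sup>2) summable_on UNIV" "\<And>w. w \<notin> words n \<Longrightarrow> f w = 0"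
  using assms unfolding fockspace_def by auto

lemma fs_lin: assumes "f \<in> fockspace n" "g \<in> fockspace n"
  shows "(\<lambda>w. c *s f w + g w) \<in> fockspace n"
proof -
  have "(\<lambda>w. 2 * (cmod c)\<^sup>2 * (norm (f w))\<^sup>2 + 2 * (norm (g w))\<^sup>2) summable_on UNIV"
    using fsD(1)[OF assms(1)] fsD(1)[OF assms(2)]
    by (intro summable_on_add summable_on_cmult_right)
  then have "(\<lambda>w. (norm (c *s f w + g w))\<^sup>2) summable_on UNIV"
  proof (rule summable_on_comparison_test)
    fix w
    show "(norm (c *s f w + g w))\<^sup>2 \<le> 2 * (cmod c)\<^sup>2 * (norm (f w))\<^sup>2 + 2 * (norm (g w))\<^sup>2"
      using norm_add_sq[of "c *s f w" "g w"] by (simp add: norm_scale_sq)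
  qed simp
  then show ?thesis using assms unfolding fockspace_def by auto
qed

lemma emb_fs: "emb u \<in> fockspace n"
proof -
  have "(\<lambda>w. (norm (emb u w))\<^sup>2) summable_on UNIV"
    by (rule summable_on_cong_neutral[where S="{[]}", THEN iffD1]) (auto simp: emb_def)
  moreover have "[] \<in> words n" by (simp add: words_def)
  ultimately show ?thesis unfolding fockspace_def by (auto simp: emb_def)
qed

lemma fip_summable: assumes "f \<in> fockspace n" "g \<in> fockspace n"
  shows "(\<lambda>w. cinner (f w) (g w)) summable_on UNIV"
proof -
  have "(\<lambda>w. ((norm (f w))\<^sup>2 + (norm (g w))\<^sup>2) / 2) summable_on UNIV"
    using fsD(1)[OF assms(1)] fsD(1)[OF assms(2)]
    by (intro summable_on_add summable_on_cdivide)
  then have "(\<lambda>w. norm (cinner (f w) (g w))) summable_on UNIV"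
    by (rule summable_on_comparison_test) (auto simp: cinner_bound cinner_bound2)
  then show ?thesis by (rule abs_summable_summable)
qed

lemma fip_abs_summable: assumes "f \<in> fockspace n" "g \<in> fockspace n"
  shows "Infinite_Sum.abs_summable_on (\<lambda>w. cinner (f w) (g w)) UNIV"
proof -
  have "(\<lambda>w. ((norm (f w))\<^sup>2 + (norm (g w))\<^sup>2) / 2) summable_on UNIV"
    using fsD(1)[OF assms(1)] fsD(1)[OF assms(2)]
    by (intro summable_on_add summable_on_cdivide)
  then show "(\<lambda>w. norm (cinner (f w) (g w))) summable_on UNIV"
    by (rule summable_on_comparison_test) (auto simp: cinner_bound cinner_bound2)
qed

lemma fip_lin_left: assumes "f \<in> fockspace n" "g \<in> fockspace n" "k \<in> fockspace n"
  shows "fip (\<lambda>w. c *s f w + g w) k = c * fip f k + fip g k"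
  unfolding fip_def cinner_add_left cinner_scale_left
  using fip_summable[OF assms(1,3)] fip_summable[OF assms(2,3)]
  by (simp add: infsum_add summable_on_cmult_right infsum_cmult_right)

lemma fip_lin_right: assumes "f \<in> fockspace n" "g \<in> fockspace n" "k \<in> fockspace n"
  shows "fip k (\<lambda>w. c *s f w + g w) = cnj c * fip k f + fip k g"
  unfolding fip_def cinner_add_right cinner_scale_right
  using fip_summable[OF assms(3,1)] fip_summable[OF assms(3,2)]
  by (simp add: infsum_add summable_on_cmult_right infsum_cmult_right)

lemma fip_cnj: "fip g f = cnj (fip f g)"
  unfolding fip_def by (subst cinner_cnj) simp

lemma fnorm_sq: assumes "f \<in> fockspace n"
  shows "(fnorm f)\<^sup>2 = (\<Sum>\<^sub>\<infinity>w. (norm (f w))\<^sup>2)"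
  unfolding fnorm_def by (simp add: infsum_nonneg)

lemma fip_self: assumes "f \<in> fockspace n"
  shows "fip f f = complex_of_real ((fnorm f)\<^sup>2)"
proof -
  have "((\<lambda>w. (norm (f w))\<^sup>2) has_sum (\<Sum>\<^sub>\<infinity>w. (norm (f w))\<^sup>2)) UNIV"
    using fsD(1)[OF assms] by (rule has_sum_infsum)
  then have "((\<lambda>w. complex_of_real ((norm (f w))\<^sup>2)) has_sum complex_of_real (\<Sum>\<^sub>\<infinity>w. (norm (f w))\<^sup>2)) UNIV"
    by (rule has_sum_of_real)
  then show ?thesis unfolding fip_def fnorm_sq[OF assms] cinner_self by (rule infsumI)
qed

lemma fip_emb: "fip (emb u) g = cinner u (g [])"
proof -
  have "fip (emb u) g = infsum (\<lambda>w. cinner (emb u w) (g w)) {[]}"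
    unfolding fip_def by (rule infsum_cong_neutral) (auto simp: emb_def)
  then show ?thesis by (simp add: emb_def)
qed

lemma fip_bound: assumes "f \<in> fockspace n" "g \<in> fockspace n"
  shows "cmod (fip f g) \<le> ((fnorm f)\<^sup>2 + (fnorm g)\<^sup>2) / 2"
proof -
  have "cmod (fip f g) \<le> (\<Sum>\<^sub>\<infinity>w. norm (cinner (f w) (g w)))"
    unfolding fip_def by (rule norm_infsum_bound[OF fip_abs_summable[OF assms]])
  also have "\<dots> \<le> (\<Sum>\<^sub>\<infinity>w. ((norm (f w))\<^sup>2 + (norm (g w))\<^sup>2) / 2)"
    using fsD(1)[OF assms(1)] fsD(1)[OF assms(2)] fip_abs_summable[OF assms]
    by (intro infsum_mono) (auto intro!: summable_on_add summable_on_cdivide simp: cinner_bound cinner_bound2)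
  also have "\<dots> = ((fnorm f)\<^sup>2 + (fnorm g)\<^sup>2) / 2"
    unfolding fnorm_sq[OF assms(1)] fnorm_sq[OF assms(2)]
    using fsD(1)[OF assms(1)] fsD(1)[OF assms(2)]
    by (simp add: infsum_add infsum_cdivide summable_on_add)
  finally show ?thesis .
qed

definition linop :: "nat \<Rightarrow> (('m::finite) fock \<Rightarrow> 'm fock) \<Rightarrow> bool" where
  "linop n A \<longleftrightarrow> (\<forall>f\<in>fockspace n. A f \<in> fockspace n) \<and>
     (\<forall>f\<in>fockspace n. \<forall>g\<in>fockspace n. \<forall>c::complex.
        A (\<lambda>w. c *s f w + g w) = (\<lambda>w. c *s A f w + A g w))"

lemma bounded_linop: "bounded_op n A \<Longrightarrow> linop n A"
  unfolding bounded_op_def linop_def by blast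

lemma linopD: assumes "linop n A"
  shows "f \<in> fockspace n \<Longrightarrow> A f \<in> fockspace n"
    "f \<in> fockspace n \<Longrightarrow> g \<in> fockspace n \<Longrightarrow> A (\<lambda>w. c *s f w + g w) = (\<lambda>w. c *s A f w + A g w)"
  using assms unfolding linop_def by blast+

lemma zero_fs: "(\<lambda>w. 0) \<in> fockspace n"
  unfolding fockspace_def by simp

lemma linop_zero: assumes "linop n A" shows "A (\<lambda>w. 0) = (\<lambda>w. 0)"
proof -
  have "A (\<lambda>w. 0) = (\<lambda>w. A (\<lambda>w. 0) w + A (\<lambda>w. 0) w)"
    using linopD(2)[OF assms zero_fs zero_fs, where c=1] by simp
  then have "\<And>w. A (\<lambda>w. 0) w = A (\<lambda>w. 0) w + A (\<lambda>w. 0) w" by (metis)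
  then show ?thesis by (simp add: fun_eq_iff)
qed

lemma linop_sum: assumes "linop n A" "finite S" "\<forall>j\<in>S. f j \<in> fockspace n"
  shows "(\<lambda>w. \<Sum>j\<in>S. c j *s f j w) \<in> fockspace n \<and>
         A (\<lambda>w. \<Sum>j\<in>S. c j *s f j w) = (\<lambda>w. \<Sum>j\<in>S. c j *s A (f j) w)"
  using assms(2,3)
proof (induction S rule: finite_induct)
  case empty
  then show ?case using zero_fs linop_zero[OF assms(1)] by simp
next
  case (insert a S)
  then have IH: "(\<lambda>w. \<Sum>j\<in>S. c j *s f j w) \<in> fockspace n"
    "A (\<lambda>w. \<Sum>j\<in>S. c j *s f j w) = (\<lambda>w. \<Sum>j\<in>S. c j *s A (f j) w)"
    and fa: "f a \<in> fockspace n" by auto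
  have e: "(\<lambda>w. \<Sum>j\<in>insert a S. c j *s f j w) = (\<lambda>w. c a *s f a w + (\<lambda>w. \<Sum>j\<in>S. c j *s f j w) w)"
    using insert(1,2) by simp
  show ?case unfolding e
    using fs_lin[OF fa IH(1)] linopD(2)[OF assms(1) fa IH(1)] IH(2) insert(1,2) by simp
qed

lemma quad_expand: assumes "linop n T" "f \<in> fockspace n" "g \<in> fockspace n"
  shows "fip (T (\<lambda>w. c *s f w + g w)) (\<lambda>w. c *s f w + g w)
     = c * cnj c * fip (T f) f + c * fip (T f) g + cnj c * fip (T g) f + fip (T g) g"
proof -
  have Tf: "T f \<in> fockspace n" and Tg: "T g \<in> fockspace n" using linopD(1)[OF assms(1)] assms by auto
  have fg: "(\<lambda>w. c *s f w + g w) \<in> fockspace n" using fs_lin assms by blast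
  show ?thesis
    unfolding linopD(2)[OF assms]
    using fip_lin_left[OF Tf Tg fg] fip_lin_right[OF assms(2,3) Tf] fip_lin_right[OF assms(2,3) Tg]
    by (simp add: algebra_simps)
qed

lemma selfadj: assumes "linop n T" "\<forall>f\<in>fockspace n. fip (T f) f \<in> \<real>"
  and "f \<in> fockspace n" "g \<in> fockspace n"
  shows "fip (T g) f = cnj (fip (T f) g)"
proof -
  define a where "a = fip (T f) g"
  define b where "b = fip (T g) f"
  have R: "\<And>h. h \<in> fockspace n \<Longrightarrow> Im (fip (T h) h) = 0"
    using assms(2) complex_is_Real_iff by blast
  have "Im (fip (T f) f + a + b + fip (T g) g) = 0"
    using quad_expand[OF assms(1,3,4), of 1] R[OF fs_lin[OF assms(3,4), of 1]] by (simp add: a_def b_def)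
  then have 1: "Im a + Im b = 0" using R assms(3,4) by simp
  have "Im (fip (T f) f + \<i> * a - \<i> * b + fip (T g) g) = 0"
    using quad_expand[OF assms(1,3,4), of \<i>] R[OF fs_lin[OF assms(3,4), of \<i>]] by (simp add: a_def b_def)
  then have 2: "Re a - Re b = 0" using R assms(3,4) by simp
  from 1 2 have "b = cnj a" by (simp add: complex_eq_iff)
  then show ?thesis by (simp add: a_def b_def)
qed

lemma approx_poly: assumes "q \<in> fockspace n" "\<delta> > 0"
  shows "\<exists>p\<in>polys n. p [] = q [] \<and> (\<lambda>w. q w - p w) \<in> fockspace n \<and> (fnorm (\<lambda>w. q w - p w))\<^sup>2 < \<delta>"
proof -
  define g where "g = (\<lambda>w. (norm (q w))\<^sup>2)"
  have gs: "g summable_on UNIV" using fsD(1)[OF assms(1)] by (simp add: g_def)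
  define S where "S = infsum g UNIV"
  have hs: "(g has_sum S) UNIV" using gs by (simp add: S_def)
  obtain F where F: "finite F" "dist (sum g F) S \<le> \<delta>/2"
    using has_sum_finite_approximation[OF hs, of "\<delta>/2"] assms(2) by auto
  define F' where "F' = insert [] F"
  have F': "finite F'" using F by (simp add: F'_def)
  have "sum g F \<le> sum g F'" unfolding F'_def using F(1) by (intro sum_mono2) (auto simp: g_def)
  with F(2) have SF: "S - sum g F' \<le> \<delta>/2" by (simp add: dist_real_def abs_if split: if_splits)
  define p where "p w = (if w \<in> F' then q w else 0)" for w
  have pfs: "p \<in> fockspace n"
  proof -
    have "(\<lambda>w. (norm (p w))\<^sup>2) summable_on UNIV"
      by (rule summable_on_comparison_test[OF fsD(1)[OF assms(1)]]) (auto simp: p_def)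
    then show ?thesis using fsD(2)[OF assms(1)] unfolding fockspace_def p_def by auto
  qed
  have pp: "p \<in> polys n" unfolding polys_def using pfs F'
    by (auto intro: finite_subset[of _ F'] simp: p_def)
  have r_eq: "(\<lambda>w. q w - p w) = (\<lambda>w. (-1) *s p w + q w)" by (simp add: fun_eq_iff)
  have rfs: "(\<lambda>w. q w - p w) \<in> fockspace n" unfolding r_eq by (rule fs_lin[OF pfs assms(1)])
  have "(g has_sum sum g F') F'" using F' by simp
  then have "(g has_sum (S - sum g F')) (UNIV - F')" by (intro has_sum_Diff[OF hs]) auto
  then have "infsum g (UNIV - F') = S - sum g F'" by (rule infsumI)
  moreover have "(\<Sum>\<^sub>\<infinity>w. (norm (q w - p w))\<^sup>2) = infsum g (UNIV - F')"
    by (rule infsum_cong_neutral) (auto simp: p_def g_def)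
  ultimately have "(fnorm (\<lambda>w. q w - p w))\<^sup>2 = S - sum g F'"
    using fnorm_sq[OF rfs] by simp
  with SF assms(2) have "(fnorm (\<lambda>w. q w - p w))\<^sup>2 < \<delta>" by simp
  moreover have "p [] = q []" by (simp add: p_def F'_def)
  ultimately show ?thesis using pp rfs by blast
qed

lemma cinner_diff_left: "cinner (x - y) z = cinner x z - cinner y z"
  unfolding cinner_def by (simp add: left_diff_distrib sum_subtractf)

lemma emb_expand: "emb u = (\<lambda>w. \<Sum>j\<in>UNIV. (u $ j) *s emb (axis j 1) w)"
proof (rule ext)
  fix w
  show "emb u w = (\<Sum>j\<in>UNIV. (u $ j) *s emb (axis j 1) w)"
  proof (cases "w = []")
    case True
    have "(\<Sum>j\<in>UNIV. (u $ j) *s (axis j 1 :: complex^'a)) = u"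
      unfolding vec_eq_iff
    proof
      fix i
      have "(\<Sum>j\<in>UNIV. (u $ j) *s (axis j 1 :: complex^'a)) $ i = (\<Sum>j\<in>UNIV. u $ j * (axis j 1 :: complex^'a) $ i)"
        by (simp add: sum_component)
      also have "\<dots> = (\<Sum>j\<in>UNIV. if j = i then u $ j else 0)"
        by (rule sum.cong) (auto simp: axis_def)
      also have "\<dots> = u $ i" by simp
      finally show "(\<Sum>j\<in>UNIV. (u $ j) *s (axis j 1 :: complex^'a)) $ i = u $ i" .
    qed
    then show ?thesis using True by (simp add: emb_def)
  qed (simp add: emb_def)
qed

lemma det_real_hermitian:
  fixes K :: "complex^'m::finite^'m"
  assumes "\<forall>i j. K$i$j = cnj (K$j$i)"
  shows "cnj (det K) = det K"
proof -
  have "cnj (det K) = det (\<chi> i j. cnj (K$i$j))"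
    unfolding det_def by (simp add: cnj_sum cnj_prod)
  also have "(\<chi> i j. cnj (K$i$j)) = transpose K"
  proof -
    have "cnj (K$i$j) = K$j$i" for i j using assms[rule_format, of j i] by simp
    then show ?thesis by (simp add: vec_eq_iff transpose_def)
  qed
  finally show ?thesis by (simp add: det_transpose)
qed

theorem mainTheorem5:
  fixes n :: nat and T Tinv :: "'m::finite fock \<Rightarrow> 'm fock"
  assumes "multi_toeplitz n T"
    and "positive_op n T"
    and "\<forall>f\<in>fockspace n. Tinv f \<in> fockspace n"
    and "\<forall>f\<in>fockspace n. T (Tinv f) = f"
    and "\<forall>f\<in>fockspace n. Tinv (T f) = f"
  shows "pred_entropy n T = - ln (Re (det (compress Tinv)))"
proof -
  let ?H = "fockspace n :: 'm fock set"
  have bT: "bounded_op n T" using assms(2) unfolding positive_op_def by blast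
  have Tlin: "linop n T" using bT by (rule bounded_linop)
  obtain C where C: "\<forall>f\<in>?H. fnorm (T f) \<le> C * fnorm f"
    using bT unfolding bounded_op_def by blast
  have pos: "\<forall>f\<in>?H. fip (T f) f \<in> \<real> \<and> 0 \<le> Re (fip (T f) f)"
    using assms(2) unfolding positive_op_def by blast
  have posR: "\<forall>f\<in>?H. fip (T f) f \<in> \<real>" using pos by blast
  have sa: "\<And>f g. f \<in> ?H \<Longrightarrow> g \<in> ?H \<Longrightarrow> fip (T g) f = cnj (fip (T f) g)"
    using selfadj[OF Tlin posR] by blast
  have TH: "\<And>f. f \<in> ?H \<Longrightarrow> T f \<in> ?H" using linopD(1)[OF Tlin] .
  have Tinvlin: "linop n Tinv"
    unfolding linop_def
  proof (intro conjI ballI allI)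
    fix f assume "f \<in> ?H" then show "Tinv f \<in> ?H" using assms(3) by blast
  next
    fix f g and c :: complex assume f: "f \<in> ?H" and g: "g \<in> ?H"
    have If: "Tinv f \<in> ?H" and Ig: "Tinv g \<in> ?H" using f g assms(3) by auto
    have "T (\<lambda>w. c *s Tinv f w + Tinv g w) = (\<lambda>w. c *s f w + g w)"
      using linopD(2)[OF Tlin If Ig] f g assms(4) by simp
    then have "Tinv (T (\<lambda>w. c *s Tinv f w + Tinv g w)) = Tinv (\<lambda>w. c *s f w + g w)" by simp
    then show "Tinv (\<lambda>w. c *s f w + g w) = (\<lambda>w. c *s Tinv f w + Tinv g w)"
      using assms(5) fs_lin[OF If Ig] by simp
  qed
  have TE: "\<And>u. T (Tinv (emb u)) = emb u" using assms(4) emb_fs by blast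
  define K where "K = compress Tinv"
  have Kv: "K *v u = Tinv (emb u) []" for u
  proof -
    have "Tinv (emb u) = (\<lambda>w. \<Sum>j\<in>UNIV. (u $ j) *s Tinv (emb (axis j 1)) w)"
      unfolding emb_expand[of u] using linop_sum[OF Tinvlin, of UNIV "\<lambda>j. emb (axis j 1)" "\<lambda>j. u $ j"]
      by (simp add: emb_fs)
    then show ?thesis
      by (simp add: K_def compress_def vec_eq_iff matrix_vector_mult_def sum_component mult.commute)
  qed
  have Kinj: "\<forall>u. K *v u = 0 \<longrightarrow> u = 0"
  proof (intro allI impI)
    fix u assume Ku: "K *v u = 0"
    define h where "h = Tinv (emb u)"
    define g where "g = emb u"
    have hH: "h \<in> ?H" unfolding h_def using assms(3) emb_fs by blast
    have gH: "g \<in> ?H" using emb_fs by (simp add: g_def)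
    have Th: "T h = g" by (simp add: h_def g_def TE)
    have h0: "h [] = 0" using Ku Kv by (simp add: h_def)
    define s where "s = (norm u)\<^sup>2"
    have a: "fip (T h) g = of_real s" unfolding Th g_def s_def fip_emb by (simp add: emb_def cinner_self)
    have b: "fip (T g) h = of_real s" using sa[OF hH gH] a by simp
    have Qh: "fip (T h) h = 0" unfolding Th g_def by (simp add: fip_emb h0)
    define q where "q = Re (fip (T g) g)"
    have q0: "q \<ge> 0" using pos gH by (simp add: q_def)
    have ineq: "0 \<le> t * t * q + 2 * t * s" for t :: real
    proof -
      have "0 \<le> Re (fip (T (\<lambda>w. complex_of_real t *s g w + h w)) (\<lambda>w. complex_of_real t *s g w + h w))"
        using pos fs_lin[OF gH hH] by blast
      also have "\<dots> = t * t * q + 2 * t * s"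
        unfolding quad_expand[OF Tlin gH hH] a b Qh q_def by simp
      finally show ?thesis .
    qed
    have s0: "s \<ge> 0" by (simp add: s_def)
    have "s = 0"
    proof (rule ccontr)
      assume "s \<noteq> 0" then have sp: "s > 0" using s0 by simp
      define t where "t = - s / (q + 1)"
      have q1: "q + 1 > 0" using q0 by simp
      have tq1: "t * (q + 1) = - s" unfolding t_def using q1 by simp
      then have tq: "t * q = - s - t" by (simp add: algebra_simps)
      have "t * t * q = t * (- s - t)" by (simp only: mult.assoc tq)
      then have "t * t * q + 2 * t * s = t * (s - t)" by (simp add: algebra_simps)
      also have "\<dots> < 0"
      proof (rule mult_neg_pos)
        show "t < 0" unfolding t_def using sp q1 by (simp add: divide_pos_pos)
        then show "0 < s - t" using sp by simp
      qed
      finally show False using ineq[of t] by simp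
    qed
    then show "u = 0" by (simp add: s_def)
  qed
  obtain B where BK: "B ** K = mat 1" using Kinj matrix_left_invertible_ker by blast
  then have KB: "K ** B = mat 1" using matrix_left_right_inverse by blast
  have pf: "cinner (B *v x) x \<in> \<real> \<and> pred_form n T x = Re (cinner (B *v x) x)" for x
  proof -
    define u where "u = B *v x"
    define h where "h = Tinv (emb u)"
    have hH: "h \<in> ?H" unfolding h_def using assms(3) emb_fs by blast
    have Th: "T h = emb u" by (simp add: h_def TE)
    have hx: "h [] = x" using Kv[of u] KB by (simp add: h_def u_def matrix_vector_mul_assoc)
    have Qh: "fip (T h) h = cinner u x" unfolding Th by (simp add: fip_emb hx)
    have QhR: "cinner u x \<in> \<real>" using Qh pos hH by metis
    define qh where "qh = Re (cinner u x)"
    define S where "S = {Re (fip (T (\<lambda>w. emb x w - p w)) (\<lambda>w. emb x w - p w)) | p. p \<in> polys n \<and> p [] = 0}"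
    have decomp: "Re (fip (T (\<lambda>w. emb x w - p w)) (\<lambda>w. emb x w - p w))
        = Re (fip (T (\<lambda>w. emb x w - p w - h w)) (\<lambda>w. emb x w - p w - h w)) + qh
        \<and> (\<lambda>w. emb x w - p w - h w) \<in> ?H"
      if p: "p \<in> ?H" "p [] = 0" for p
    proof -
      define r where "r = (\<lambda>w. emb x w - p w - h w)"
      have r_eq: "r = (\<lambda>w. (-1) *s h w + (\<lambda>w. (-1) *s p w + emb x w) w)"
        by (simp add: r_def fun_eq_iff)
      have rH: "r \<in> ?H" unfolding r_eq by (intro fs_lin hH p emb_fs)
      have r0: "r [] = 0" using p(2) hx by (simp add: r_def emb_def)
      have f_eq: "(\<lambda>w. emb x w - p w) = (\<lambda>w. 1 *s r w + h w)" by (simp add: r_def fun_eq_iff)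
      have 1: "fip (T h) r = 0" unfolding Th by (simp add: fip_emb r0)
      have 2: "fip (T r) h = 0" using sa[OF hH rH] 1 by simp
      show ?thesis unfolding f_eq using quad_expand[OF Tlin rH hH, of 1] 1 2 Qh rH
        by (simp add: qh_def r_def)
    qed
    have lower: "qh \<le> s" if "s \<in> S" for s
    proof -
      obtain p where p: "p \<in> polys n" "p [] = 0" and s: "s = Re (fip (T (\<lambda>w. emb x w - p w)) (\<lambda>w. emb x w - p w))"
        using \<open>s \<in> S\<close> unfolding S_def by blast
      have pH: "p \<in> ?H" using p(1) by (simp add: polys_def)
      show ?thesis using decomp[OF pH p(2)] pos s by force
    qed
    have upper: "\<exists>s\<in>S. s < qh + e" if e: "e > 0" for e
    proof -
      define q0 where "q0 = (\<lambda>w. (-1) *s h w + emb x w)"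
      have q0H: "q0 \<in> ?H" unfolding q0_def by (intro fs_lin hH emb_fs)
      define \<delta> where "\<delta> = e / (C\<^sup>2 + 1)"
      have C1: "C\<^sup>2 + 1 > 0" by (metis add_pos_nonneg zero_le_power2 zero_less_one add.commute)
      have dpos: "\<delta> > 0" using e C1 unfolding \<delta>_def by (rule divide_pos_pos)
      obtain p where p: "p \<in> polys n" "p [] = q0 []" "(\<lambda>w. q0 w - p w) \<in> ?H"
        "(fnorm (\<lambda>w. q0 w - p w))\<^sup>2 < \<delta>"
        using approx_poly[OF q0H dpos] by blast
      have p0: "p [] = 0" using p(2) hx by (simp add: q0_def emb_def)
      have pH: "p \<in> ?H" using p(1) by (simp add: polys_def)
      define r where "r = (\<lambda>w. emb x w - p w - h w)"
      have r_eq: "r = (\<lambda>w. q0 w - p w)" by (simp add: r_def q0_def fun_eq_iff)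
      have rH: "r \<in> ?H" using p(3) r_eq by simp
      have rn: "(fnorm r)\<^sup>2 < \<delta>" using p(4) r_eq by simp
      have TrH: "T r \<in> ?H" using TH rH by blast
      have "fnorm (T r) \<le> C * fnorm r" using C rH by blast
      moreover have "0 \<le> fnorm (T r)" by (simp add: fnorm_def infsum_nonneg)
      ultimately have "(fnorm (T r))\<^sup>2 \<le> (C * fnorm r)\<^sup>2" by (rule power_mono)
      then have Trn: "(fnorm (T r))\<^sup>2 \<le> C\<^sup>2 * (fnorm r)\<^sup>2" by (simp add: power_mult_distrib)
      have "Re (fip (T r) r) \<le> cmod (fip (T r) r)" by (rule complex_Re_le_cmod)
      also have "\<dots> \<le> ((fnorm (T r))\<^sup>2 + (fnorm r)\<^sup>2) / 2" by (rule fip_bound[OF TrH rH])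
      also have "\<dots> \<le> (C\<^sup>2 + 1) * (fnorm r)\<^sup>2" 
      proof -
        have n1: "0 \<le> (fnorm r)\<^sup>2" by simp
        have n2: "0 \<le> C\<^sup>2 * (fnorm r)\<^sup>2" by simp
        have eq: "(C\<^sup>2 + 1) * (fnorm r)\<^sup>2 = C\<^sup>2 * (fnorm r)\<^sup>2 + (fnorm r)\<^sup>2" by (simp add: algebra_simps)
        have gen: "(a + b) / 2 \<le> c + b" if "a \<le> c" "0 \<le> b" "0 \<le> c" for a b c :: real using that by (simp add: field_simps)
        show ?thesis unfolding eq by (rule gen[OF Trn n1 n2])
      qed
      also have "\<dots> < (C\<^sup>2 + 1) * \<delta>" using rn C1 by (rule mult_strict_left_mono)
      also have "\<dots> = e" using C1 by (simp add: \<delta>_def)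
      finally have "Re (fip (T r) r) < e" .
      moreover have "Re (fip (T (\<lambda>w. emb x w - p w)) (\<lambda>w. emb x w - p w)) = Re (fip (T r) r) + qh"
        using decomp[OF pH p0] by (simp add: r_def)
      moreover have "Re (fip (T (\<lambda>w. emb x w - p w)) (\<lambda>w. emb x w - p w)) \<in> S"
        unfolding S_def using p(1) p0 by blast
      ultimately show ?thesis by force
    qed
    have Sne: "S \<noteq> {}"
    proof -
      have "(\<lambda>w. 0) \<in> polys n" unfolding polys_def using zero_fs by simp
      then show ?thesis unfolding S_def by blast
    qed
    have bdd: "bdd_below S" using lower by (auto simp: bdd_below_def)
    have "Inf S = qh"
    proof (rule antisym)
      show "qh \<le> Inf S" using Sne lower by (rule cInf_greatest)
      show "Inf S \<le> qh"
      proof (rule ccontr)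
        assume "\<not> Inf S \<le> qh"
        then obtain s where "s \<in> S" "s < qh + (Inf S - qh)" using upper[of "Inf S - qh"] by auto
        then show False using cInf_lower[OF \<open>s \<in> S\<close> bdd] by simp
      qed
    qed
    then have "pred_form n T x = qh" unfolding pred_form_def S_def by simp
    then show ?thesis using QhR by (simp add: u_def qh_def)
  qed
  have Delta_eq: "Delta n T = B"
    unfolding Delta_def
  proof (rule the_equality)
    show "\<forall>x. cinner (B *v x) x = complex_of_real (pred_form n T x)"
      using pf by (metis Reals_cases Re_complex_of_real)
  next
    fix D assume D: "\<forall>x. cinner (D *v x) x = complex_of_real (pred_form n T x)"
    have "\<forall>x. cinner ((D - B) *v x) x = 0"
      using D pf by (simp add: matrix_vector_mult_diff_rdistrib cinner_diff_left)
    then have "D - B = 0" by (rule polarization_zero)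
    then show "D = B" by simp
  qed
  have herm: "\<forall>i j. K$i$j = cnj (K$j$i)"
  proof (intro allI)
    fix i j :: 'm
    define gi where "gi = Tinv (emb (axis i 1))"
    define gj where "gj = Tinv (emb (axis j 1))"
    have giH: "gi \<in> ?H" and gjH: "gj \<in> ?H" unfolding gi_def gj_def using assms(3) emb_fs by blast+
    have Tgi: "T gi = emb (axis i 1)" and Tgj: "T gj = emb (axis j 1)"
      by (auto simp: gi_def gj_def TE)
    have Kij: "K$i$j = (gj [])$i" by (simp add: K_def compress_def gj_def)
    have Kji: "K$j$i = (gi [])$j" by (simp add: K_def compress_def gi_def)
    have "fip (T gi) gj = cnj ((gj [])$i)" unfolding Tgi fip_emb by (rule cinner_axis_left)
    moreover have "fip (T gj) gi = cnj ((gi [])$j)" unfolding Tgj fip_emb by (rule cinner_axis_left)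
    moreover have "fip (T gj) gi = cnj (fip (T gi) gj)" by (rule sa[OF giH gjH])
    ultimately show "K$i$j = cnj (K$j$i)" unfolding Kij Kji by simp
  qed
  have detR: "cnj (det K) = det K" by (rule det_real_hermitian[OF herm])
  have "det B * det K = 1" using BK by (metis det_mul det_I)
  then have dB: "det B = inverse (det K)" by (metis inverse_unique mult.commute)
  obtain r where r: "det K = complex_of_real r" using detR Reals_cnj_iff Reals_cases by metis
  show ?thesis
    unfolding pred_entropy_def Delta_eq dB K_def[symmetric] r
    by (simp add: ln_inverse flip: of_real_inverse)
qed

end
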